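(* For every $n\geq 3$, the $n$-dimensional hypercube $H_n$, as an instance of Bipartite Influence, satisfies $H_n=0$.
   Context: $H_n$ has vertex set $\{0,1\}^n$, two vertices adjacent iff they differ in exactly one coordinate; a vertex is black if it has an odd number of nonzero coordinates and white otherwise. Bipartite Influence: on a bipartite graph with black and white vertices (edges between colours), isolated vertices are credited to the owner of their colour (black to Left, white to Right); Left picks a black vertex $x$ and removes $x$, its neighbours and the vertices that become isolated (credited to her); Right likewise with white vertices; score = Left's total minus Right's. $G=0$ means $Ls(G+X)=Ls(X)$ and $Rs(G+X)=Rs(X)$ for every position $X$ (disjoint union as sum), where $Ls,Rs$ are the optimal scores with Left, resp. Right, moving first. *)

theory Defs
  imports Main
begin

text \<open>A position of Bipartite Influence over vertex type 'a: an adjacency relation,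
  a colouring (True = black, False = white) and the finite set of remaining vertices.
  Only the subgraph induced on the vertex set matters.\<close>

type_synonym 'a pos = "('a \<Rightarrow> 'a \<Rightarrow> bool) \<times> ('a \<Rightarrow> bool) \<times> 'a set"

definition wf_pos :: "'a pos \<Rightarrow> bool" where
  "wf_pos G = (case G of (adj, blk, V) \<Rightarrow>
     finite V \<and> (\<forall>x y. adj x y \<longrightarrow> adj y x) \<and> (\<forall>x. \<not> adj x x)
     \<and> (\<forall>x y. adj x y \<longrightarrow> blk x \<noteq> blk y))"

definition cnbhd :: "('a \<Rightarrow> 'a \<Rightarrow> bool) \<Rightarrow> 'a set \<Rightarrow> 'a \<Rightarrow> 'a set" where
  "cnbhd adj V x = insert x {y \<in> V. adj x y}"

definition has_edge :: "('a \<Rightarrow> 'a \<Rightarrow> bool) \<Rightarrow> 'a set \<Rightarrow> bool" where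
  "has_edge adj V = (\<exists>x\<in>V. \<exists>y\<in>V. adj x y)"

text \<open>Credit of isolated vertices: black to Left, white to Right.\<close>
definition bal :: "('a \<Rightarrow> bool) \<Rightarrow> 'a set \<Rightarrow> int" where
  "bal blk V = int (card {v \<in> V. blk v}) - int (card {v \<in> V. \<not> blk v})"

text \<open>Optimal scores (Left minus Right) with Left (ILs) resp. Right (IRs) to move.
  A move by Left on a non-isolated black vertex x removes the closed neighbourhood
  N[x] and credits its vertices to Left; vertices that become isolated are
  (necessarily black and) kept, being credited to Left via bal at the end.\<close>
function ILs :: "('a \<Rightarrow> 'a \<Rightarrow> bool) \<Rightarrow> ('a \<Rightarrow> bool) \<Rightarrow> 'a set \<Rightarrow> int"
  and IRs :: "('a \<Rightarrow> 'a \<Rightarrow> bool) \<Rightarrow> ('a \<Rightarrow> bool) \<Rightarrow> 'a set \<Rightarrow> int" where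
  "ILs adj blk V = (if \<not> finite V \<or> \<not> has_edge adj V then bal blk V
     else Max ((\<lambda>x. int (card (cnbhd adj V x)) + IRs adj blk (V - cnbhd adj V x))
                ` {x \<in> V. blk x \<and> (\<exists>y\<in>V. adj x y)}))"
| "IRs adj blk V = (if \<not> finite V \<or> \<not> has_edge adj V then bal blk V
     else Min ((\<lambda>x. ILs adj blk (V - cnbhd adj V x) - int (card (cnbhd adj V x)))
                ` {x \<in> V. \<not> blk x \<and> (\<exists>y\<in>V. adj x y)}))"
  by pat_completeness auto
termination
  by (relation "measure (\<lambda>p. case p of Inl (a, b, V) \<Rightarrow> card V | Inr (a, b, V) \<Rightarrow> card V)")
     (auto simp: cnbhd_def intro!: psubset_card_mono)

definition Ls :: "'a pos \<Rightarrow> int" where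
  "Ls G = (case G of (adj, blk, V) \<Rightarrow> ILs adj blk V)"

definition Rs :: "'a pos \<Rightarrow> int" where
  "Rs G = (case G of (adj, blk, V) \<Rightarrow> IRs adj blk V)"

definition psum :: "'a pos \<Rightarrow> 'b pos \<Rightarrow> ('a + 'b) pos" where
  "psum G X = (case G of (adj1, blk1, V1) \<Rightarrow> case X of (adj2, blk2, V2) \<Rightarrow>
     ((\<lambda>u v. case (u, v) of (Inl a, Inl a') \<Rightarrow> adj1 a a' | (Inr b, Inr b') \<Rightarrow> adj2 b b'
                         | _ \<Rightarrow> False),
      case_sum blk1 blk2,
      Inl ` V1 \<union> Inr ` V2))"

definition hypercube :: "nat \<Rightarrow> bool list pos" where
  "hypercube n =
     ((\<lambda>xs ys. length xs = length ys \<and> card {i. i < length xs \<and> xs ! i \<noteq> ys ! i} = 1),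
      (\<lambda>xs. odd (length (filter id xs))),
      {xs. length xs = n})"

end

theory Submission
  imports Defs
begin
declare ILs.simps[simp del] IRs.simps[simp del]
definition wfa :: "('a \<Rightarrow> 'a \<Rightarrow> bool) \<Rightarrow> ('a \<Rightarrow> bool) \<Rightarrow> bool" where
  "wfa adj blk = ((\<forall>x y. adj x y \<longrightarrow> adj y x) \<and> (\<forall>x. \<not> adj x x) \<and> (\<forall>x y. adj x y \<longrightarrow> blk x \<noteq> blk y))"

lemma ILs_edgeless: "finite V \<Longrightarrow> \<not> has_edge adj V \<Longrightarrow> ILs adj blk V = bal blk V"
  by (simp add: ILs.simps)
lemma IRs_edgeless: "finite V \<Longrightarrow> \<not> has_edge adj V \<Longrightarrow> IRs adj blk V = bal blk V"
  by (simp add: IRs.simps)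

lemma ILs_ge:
  assumes "finite V" "x \<in> V" "blk x" "y \<in> V" "adj x y"
  shows "int (card (cnbhd adj V x)) + IRs adj blk (V - cnbhd adj V x) \<le> ILs adj blk V"
proof -
  have "has_edge adj V" using assms by (auto simp: has_edge_def)
  then show ?thesis using assms
    by (subst ILs.simps) (auto intro!: Max_ge)
qed

lemma IRs_le:
  assumes "finite V" "x \<in> V" "\<not> blk x" "y \<in> V" "adj x y"
  shows "IRs adj blk V \<le> ILs adj blk (V - cnbhd adj V x) - int (card (cnbhd adj V x))"
proof -
  have "has_edge adj V" using assms by (auto simp: has_edge_def)
  then show ?thesis using assms
    by (subst IRs.simps) (auto intro!: Min_le)
qed

lemma ILs_obtain:
  assumes "finite V" "has_edge adj V" "wfa adj blk"
  obtains x where "x \<in> V" "blk x" "\<exists>y\<in>V. adj x y"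
    "ILs adj blk V = int (card (cnbhd adj V x)) + IRs adj blk (V - cnbhd adj V x)"
proof -
  let ?M = "{x \<in> V. blk x \<and> (\<exists>y\<in>V. adj x y)}"
  let ?f = "(\<lambda>x. int (card (cnbhd adj V x)) + IRs adj blk (V - cnbhd adj V x))"
  obtain a b where ab: "a \<in> V" "b \<in> V" "adj a b" using assms(2) unfolding has_edge_def by blast
  have ne: "?M \<noteq> {}"
  proof (cases "blk a")
    case True then show ?thesis using ab by blast
  next
    case False
    have "adj b a" "blk b \<noteq> blk a" using ab assms(3) unfolding wfa_def by blast+
    then show ?thesis using ab False by blast
  qed
  have fin: "finite ?M" using assms(1) by auto
  have "Max (?f ` ?M) \<in> ?f ` ?M" using ne fin by (intro Max_in) auto
  then obtain x where x: "x \<in> ?M" "Max (?f ` ?M) = ?f x" by (metis (no_types, lifting) imageE)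
  have "ILs adj blk V = Max (?f ` ?M)" using assms(1,2) by (subst ILs.simps) simp
  then show ?thesis using x by (intro that) auto
qed

lemma IRs_obtain:
  assumes "finite V" "has_edge adj V" "wfa adj blk"
  obtains x where "x \<in> V" "\<not> blk x" "\<exists>y\<in>V. adj x y"
    "IRs adj blk V = ILs adj blk (V - cnbhd adj V x) - int (card (cnbhd adj V x))"
proof -
  let ?M = "{x \<in> V. \<not> blk x \<and> (\<exists>y\<in>V. adj x y)}"
  let ?f = "(\<lambda>x. ILs adj blk (V - cnbhd adj V x) - int (card (cnbhd adj V x)))"
  obtain a b where ab: "a \<in> V" "b \<in> V" "adj a b" using assms(2) unfolding has_edge_def by blast
  have ne: "?M \<noteq> {}"
  proof (cases "blk a")
    case False then show ?thesis using ab by blast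
  next
    case True
    have "adj b a" "blk b \<noteq> blk a" using ab assms(3) unfolding wfa_def by blast+
    then show ?thesis using ab True by blast
  qed
  have fin: "finite ?M" using assms(1) by auto
  have "Min (?f ` ?M) \<in> ?f ` ?M" using ne fin by (intro Min_in) auto
  then obtain x where x: "x \<in> ?M" "Min (?f ` ?M) = ?f x" by (metis (no_types, lifting) imageE)
  have "IRs adj blk V = Min (?f ` ?M)" using assms(1,2) by (subst IRs.simps) simp
  then show ?thesis using x by (intro that) auto
qed


lemma cnbhd_diff: "x \<notin> D \<Longrightarrow> cnbhd adj (V - D) x = cnbhd adj V x - D"
  by (auto simp: cnbhd_def)

lemma cnbhd_union: "x \<in> A \<Longrightarrow> \<forall>b\<in>B. \<not> adj x b \<Longrightarrow> cnbhd adj (A \<union> B) x = cnbhd adj A x"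
  by (auto simp: cnbhd_def)

lemma cnbhd_sub: "x \<in> V \<Longrightarrow> cnbhd adj V x \<subseteq> V"
  by (auto simp: cnbhd_def)

lemma cnbhd_fin: "finite V \<Longrightarrow> finite (cnbhd adj V x)"
  by (auto simp: cnbhd_def)

lemma bal_union: "finite A \<Longrightarrow> finite B \<Longrightarrow> A \<inter> B = {} \<Longrightarrow> bal blk (A \<union> B) = bal blk A + bal blk B"
proof -
  assume f: "finite A" "finite B" and d: "A \<inter> B = {}"
  have 1: "{v \<in> A \<union> B. blk v} = {v \<in> A. blk v} \<union> {v \<in> B. blk v}" by auto
  have 2: "{v \<in> A \<union> B. \<not> blk v} = {v \<in> A. \<not> blk v} \<union> {v \<in> B. \<not> blk v}" by auto
  have "card {v \<in> A \<union> B. blk v} = card {v \<in> A. blk v} + card {v \<in> B. blk v}"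
    unfolding 1 using f d by (intro card_Un_disjoint) auto
  moreover have "card {v \<in> A \<union> B. \<not> blk v} = card {v \<in> A. \<not> blk v} + card {v \<in> B. \<not> blk v}"
    unfolding 2 using f d by (intro card_Un_disjoint) auto
  ultimately show ?thesis unfolding bal_def by simp
qed

lemma iso_split:
  assumes wf: "wfa adj blk" and fA: "finite A" and fB: "finite B" and d: "A \<inter> B = {}"
    and iso: "\<forall>b\<in>B. \<forall>v\<in>A \<union> B. \<not> adj b v \<and> \<not> adj v b"
  shows "ILs adj blk (A \<union> B) = ILs adj blk A + bal blk B \<and> IRs adj blk (A \<union> B) = IRs adj blk A + bal blk B"
  using fA d iso
proof (induction "card A" arbitrary: A rule: less_induct)
  case less
  have fU: "finite (A \<union> B)" using less.prems fB by auto
  have he: "has_edge adj (A \<union> B) = has_edge adj A" using less.prems(3) unfolding has_edge_def by blast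
  show ?case
  proof (cases "has_edge adj A")
    case False
    then show ?thesis using he fU less.prems fB
      by (simp add: ILs_edgeless IRs_edgeless bal_union)
  next
    case True
    have key: "\<And>x. x \<in> A \<Longrightarrow> cnbhd adj (A \<union> B) x = cnbhd adj A x
       \<and> (A \<union> B) - cnbhd adj A x = (A - cnbhd adj A x) \<union> B
       \<and> card (A - cnbhd adj A x) < card A"
    proof -
      fix x assume x: "x \<in> A"
      have "cnbhd adj (A \<union> B) x = cnbhd adj A x" using x less.prems(3) by (intro cnbhd_union) auto
      moreover have "cnbhd adj A x \<subseteq> A" using x by (rule cnbhd_sub)
      moreover have "card (A - cnbhd adj A x) < card A" using x less.prems(1)
        by (intro psubset_card_mono) (auto simp: cnbhd_def)
      ultimately show "?thesis x" using less.prems(2) by blast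
    qed
    have IH: "\<And>x. x \<in> A \<Longrightarrow> ILs adj blk ((A - cnbhd adj A x) \<union> B) = ILs adj blk (A - cnbhd adj A x) + bal blk B
       \<and> IRs adj blk ((A - cnbhd adj A x) \<union> B) = IRs adj blk (A - cnbhd adj A x) + bal blk B"
      using key less.prems by (intro less.hyps) auto
    have inA: "\<And>x y. x \<in> A \<union> B \<Longrightarrow> y \<in> A \<union> B \<Longrightarrow> adj x y \<Longrightarrow> x \<in> A \<and> y \<in> A"
      using less.prems(3) by blast
    have L1: "ILs adj blk (A \<union> B) \<le> ILs adj blk A + bal blk B"
    proof -
      obtain x where x: "x \<in> A \<union> B" "blk x" "\<exists>y\<in>A \<union> B. adj x y"
        "ILs adj blk (A \<union> B) = int (card (cnbhd adj (A \<union> B) x)) + IRs adj blk (A \<union> B - cnbhd adj (A \<union> B) x)"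
        using ILs_obtain[OF fU] True he wf by metis
      then obtain y where y: "x \<in> A" "y \<in> A" "adj x y" using inA by blast
      have "int (card (cnbhd adj A x)) + IRs adj blk (A - cnbhd adj A x) \<le> ILs adj blk A"
        using y x(2) less.prems(1) by (intro ILs_ge) auto
      then show ?thesis using x(4) key[OF y(1)] IH[OF y(1)] by simp
    qed
    have L2: "ILs adj blk (A \<union> B) \<ge> ILs adj blk A + bal blk B"
    proof -
      obtain x where x: "x \<in> A" "blk x" "\<exists>y\<in>A. adj x y"
        "ILs adj blk A = int (card (cnbhd adj A x)) + IRs adj blk (A - cnbhd adj A x)"
        using ILs_obtain[OF less.prems(1)] True wf by metis
      then obtain y where y: "y \<in> A" "adj x y" by blast
      have "int (card (cnbhd adj (A \<union> B) x)) + IRs adj blk (A \<union> B - cnbhd adj (A \<union> B) x) \<le> ILs adj blk (A \<union> B)"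
        using y x fU by (intro ILs_ge) auto
      then show ?thesis using x(4) key[OF x(1)] IH[OF x(1)] by simp
    qed
    have R1: "IRs adj blk (A \<union> B) \<ge> IRs adj blk A + bal blk B"
    proof -
      obtain x where x: "x \<in> A \<union> B" "\<not> blk x" "\<exists>y\<in>A \<union> B. adj x y"
        "IRs adj blk (A \<union> B) = ILs adj blk (A \<union> B - cnbhd adj (A \<union> B) x) - int (card (cnbhd adj (A \<union> B) x))"
        using IRs_obtain[OF fU] True he wf by metis
      then obtain y where y: "x \<in> A" "y \<in> A" "adj x y" using inA by blast
      have "IRs adj blk A \<le> ILs adj blk (A - cnbhd adj A x) - int (card (cnbhd adj A x))"
        using y x(2) less.prems(1) by (intro IRs_le) auto
      then show ?thesis using x(4) key[OF y(1)] IH[OF y(1)] by simp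
    qed
    have R2: "IRs adj blk (A \<union> B) \<le> IRs adj blk A + bal blk B"
    proof -
      obtain x where x: "x \<in> A" "\<not> blk x" "\<exists>y\<in>A. adj x y"
        "IRs adj blk A = ILs adj blk (A - cnbhd adj A x) - int (card (cnbhd adj A x))"
        using IRs_obtain[OF less.prems(1)] True wf by metis
      then obtain y where y: "y \<in> A" "adj x y" by blast
      have "IRs adj blk (A \<union> B) \<le> ILs adj blk (A \<union> B - cnbhd adj (A \<union> B) x) - int (card (cnbhd adj (A \<union> B) x))"
        using y x fU by (intro IRs_le) auto
      then show ?thesis using x(4) key[OF x(1)] IH[OF x(1)] by simp
    qed
    show ?thesis using L1 L2 R1 R2 by simp
  qed
qed


lemma wfa_sym: "wfa adj blk \<Longrightarrow> adj x y \<Longrightarrow> adj y x" by (auto simp: wfa_def)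
lemma wfa_irr: "wfa adj blk \<Longrightarrow> \<not> adj x x" by (auto simp: wfa_def)
lemma wfa_col: "wfa adj blk \<Longrightarrow> adj x y \<Longrightarrow> blk x \<noteq> blk y" by (auto simp: wfa_def)

lemma iso_one:
  assumes wf: "wfa adj blk" and f: "finite V" and x: "x \<in> V" and iso: "\<forall>y\<in>V. \<not> adj x y"
  shows "ILs adj blk V = ILs adj blk (V - {x}) + (if blk x then 1 else -1)
       \<and> IRs adj blk V = IRs adj blk (V - {x}) + (if blk x then 1 else -1)"
proof -
  have V: "V = (V - {x}) \<union> {x}" using x by auto
  have e1: "{v \<in> {x}. blk v} = (if blk x then {x} else {})" "{v\<in>{x}. \<not> blk v} = (if blk x then {} else {x})" by auto
  have "bal blk {x} = (if blk x then 1 else -1)"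
    unfolding bal_def e1 by simp
  moreover have "ILs adj blk ((V - {x}) \<union> {x}) = ILs adj blk (V - {x}) + bal blk {x} \<and>
      IRs adj blk ((V - {x}) \<union> {x}) = IRs adj blk (V - {x}) + bal blk {x}"
    using f iso wfa_sym[OF wf] wfa_irr[OF wf] by (intro iso_split[OF wf]) auto
  ultimately show ?thesis using V by metis
qed

lemma card_split: "finite A \<Longrightarrow> card A = card (A - B) + card (A \<inter> B)"
proof -
  assume "finite A"
  have "A = (A - B) \<union> (A \<inter> B)" by auto
  then have "card A = card ((A - B) \<union> (A \<inter> B))" by simp
  also have "\<dots> = card (A - B) + card (A \<inter> B)" using \<open>finite A\<close> by (intro card_Un_disjoint) auto
  finally show ?thesis .
qed

lemma card_bw: "finite V \<Longrightarrow> card V = card {v\<in>V. blk v} + card {v\<in>V. \<not> blk v}"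
proof -
  assume f: "finite V"
  have "card V = card (V - {v\<in>V. \<not> blk v}) + card (V \<inter> {v\<in>V. \<not> blk v})" using f by (rule card_split)
  moreover have "V - {v\<in>V. \<not> blk v} = {v\<in>V. blk v}" "V \<inter> {v\<in>V. \<not> blk v} = {v\<in>V. \<not> blk v}" by auto
  ultimately show ?thesis by simp
qed

definition WI :: "('a \<Rightarrow> 'a \<Rightarrow> bool) \<Rightarrow> ('a \<Rightarrow> bool) \<Rightarrow> 'a set \<Rightarrow> 'a set" where
  "WI adj blk V = {w \<in> V. \<not> blk w \<and> \<not> (\<exists>y\<in>V. adj w y)}"

lemma WI_mono:
  assumes wf: "wfa adj blk" and z: "z \<in> V" "\<exists>y\<in>V. adj z y"
  shows "WI adj blk V \<subseteq> WI adj blk (V - cnbhd adj V z)"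
  using z wfa_sym[OF wf] unfolding WI_def cnbhd_def by blast

lemma U_bound:
  assumes wf: "wfa adj blk" and f: "finite V"
  shows "ILs adj blk V \<le> int (card V) - 2 * int (card (WI adj blk V))
       \<and> IRs adj blk V \<le> int (card V) - 2 * int (card (WI adj blk V))"
  using f
proof (induction "card V" arbitrary: V rule: less_induct)
  case less
  show ?case
  proof (cases "has_edge adj V")
    case False
    have "WI adj blk V = {v\<in>V. \<not> blk v}" using False unfolding WI_def has_edge_def by auto
    then have "bal blk V = int (card V) - 2 * int (card (WI adj blk V))"
      using card_bw[OF less.prems, of blk] unfolding bal_def by simp
    then show ?thesis using False less.prems by (simp add: ILs_edgeless IRs_edgeless)
  next
    case True
    have gen: "\<And>z. z \<in> V \<Longrightarrow> \<exists>y\<in>V. adj z y \<Longrightarrow>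
        int (card (V - cnbhd adj V z)) - 2 * int (card (WI adj blk (V - cnbhd adj V z)))
        \<le> int (card V) - int (card (cnbhd adj V z)) - 2 * int (card (WI adj blk V))
        \<and> card (V - cnbhd adj V z) < card V"
    proof -
      fix z assume z: "z \<in> V" "\<exists>y\<in>V. adj z y"
      have s: "cnbhd adj V z \<subseteq> V" by (rule cnbhd_sub[OF z(1)])
      have c: "card V = card (V - cnbhd adj V z) + card (V \<inter> cnbhd adj V z)" using less.prems by (rule card_split)
      have c2: "V \<inter> cnbhd adj V z = cnbhd adj V z" using s by auto
      have "card (WI adj blk V) \<le> card (WI adj blk (V - cnbhd adj V z))"
        using WI_mono[OF wf z] less.prems by (intro card_mono) (auto simp: WI_def)
      moreover have "card (V - cnbhd adj V z) < card V" using z less.prems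
        by (intro psubset_card_mono) (auto simp: cnbhd_def)
      ultimately show "?thesis z" using c c2 by simp
    qed
    have A: "ILs adj blk V \<le> int (card V) - 2 * int (card (WI adj blk V))"
    proof -
      obtain x where x: "x \<in> V" "blk x" "\<exists>y\<in>V. adj x y"
        "ILs adj blk V = int (card (cnbhd adj V x)) + IRs adj blk (V - cnbhd adj V x)"
        using ILs_obtain[OF less.prems True wf] by metis
      have "IRs adj blk (V - cnbhd adj V x) \<le> int (card (V - cnbhd adj V x)) - 2 * int (card (WI adj blk (V - cnbhd adj V x)))"
        using less.hyps gen[OF x(1,3)] less.prems by blast
      then show ?thesis using x(4) gen[OF x(1,3)] by linarith
    qed
    have B: "IRs adj blk V \<le> int (card V) - 2 * int (card (WI adj blk V))"
    proof -
      obtain x where x: "x \<in> V" "\<not> blk x" "\<exists>y\<in>V. adj x y"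
        "IRs adj blk V = ILs adj blk (V - cnbhd adj V x) - int (card (cnbhd adj V x))"
        using IRs_obtain[OF less.prems True wf] by metis
      have "ILs adj blk (V - cnbhd adj V x) \<le> int (card (V - cnbhd adj V x)) - 2 * int (card (WI adj blk (V - cnbhd adj V x)))"
        using less.hyps gen[OF x(1,3)] less.prems by blast
      then show ?thesis using x(4) gen[OF x(1,3)] by linarith
    qed
    show ?thesis using A B by simp
  qed
qed


lemma M_lemma:
  assumes wf: "wfa adj blk" and f: "finite V"
  shows "(\<forall>x\<in>V. blk x \<longrightarrow>
           ILs adj blk V \<le> int (card (cnbhd adj V x)) + ILs adj blk (V - cnbhd adj V x)
         \<and> IRs adj blk V \<le> int (card (cnbhd adj V x)) + IRs adj blk (V - cnbhd adj V x))
         \<and> IRs adj blk V \<le> ILs adj blk V"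
  using f
proof (induction "card V" arbitrary: V rule: less_induct)
  case less
  note fV = less.prems
  have IH: "\<And>W. W \<subseteq> V \<Longrightarrow> card W < card V \<Longrightarrow> (\<forall>x\<in>W. blk x \<longrightarrow>
           ILs adj blk W \<le> int (card (cnbhd adj W x)) + ILs adj blk (W - cnbhd adj W x)
         \<and> IRs adj blk W \<le> int (card (cnbhd adj W x)) + IRs adj blk (W - cnbhd adj W x))
         \<and> IRs adj blk W \<le> ILs adj blk W"
    using less.hyps fV finite_subset by blast
  have smaller: "\<And>z. z \<in> V \<Longrightarrow> card (V - cnbhd adj V z) < card V"
    using fV by (intro psubset_card_mono) (auto simp: cnbhd_def)
  have csplit: "\<And>z. z \<in> V \<Longrightarrow> card V = card (V - cnbhd adj V z) + card (cnbhd adj V z)"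
  proof -
    fix z assume z: "z \<in> V"
    have "V \<inter> cnbhd adj V z = cnbhd adj V z" using cnbhd_sub[OF z] by auto
    then show "?thesis z" using card_split[OF fV, of "cnbhd adj V z"] by simp
  qed
  have isocase: "\<And>x. x \<in> V \<Longrightarrow> blk x \<Longrightarrow> \<not> (\<exists>y\<in>V. adj x y) \<Longrightarrow>
           ILs adj blk V = int (card (cnbhd adj V x)) + ILs adj blk (V - cnbhd adj V x)
         \<and> IRs adj blk V = int (card (cnbhd adj V x)) + IRs adj blk (V - cnbhd adj V x)"
  proof -
    fix x assume x: "x \<in> V" "blk x" "\<not> (\<exists>y\<in>V. adj x y)"
    have "cnbhd adj V x = {x}" using x unfolding cnbhd_def by auto
    then show "?thesis x" using iso_one[OF wf fV x(1)] x by simp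
  qed
  have R: "\<And>x. x \<in> V \<Longrightarrow> blk x \<Longrightarrow>
     IRs adj blk V \<le> int (card (cnbhd adj V x)) + IRs adj blk (V - cnbhd adj V x)"
  proof -
    fix x assume x: "x \<in> V" "blk x"
    show "?thesis x"
    proof (cases "\<exists>y\<in>V. adj x y")
      case False
      then show ?thesis using isocase x by simp
    next
      case True
      then obtain y0 where y0: "y0 \<in> V" "adj x y0" by blast
      define Nx where "Nx = cnbhd adj V x"
      define H where "H = V - Nx"
      have fH: "finite H" using fV H_def by simp
      show ?thesis
      proof (cases "has_edge adj H")
        case True
        obtain y where y: "y \<in> H" "\<not> blk y" "\<exists>y1\<in>H. adj y y1"
          "IRs adj blk H = ILs adj blk (H - cnbhd adj H y) - int (card (cnbhd adj H y))"
          using IRs_obtain[OF fH True wf] by metis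
        obtain y1 where y1: "y1 \<in> H" "adj y y1" using y(3) by blast
        have yV: "y \<in> V" "y1 \<in> V" using y(1) y1(1) H_def by auto
        define Ny where "Ny = cnbhd adj V y"
        define G where "G = V - Ny"
        have r1: "IRs adj blk V \<le> ILs adj blk G - int (card Ny)"
          unfolding G_def Ny_def using IRs_le[where adj=adj and blk=blk, OF fV yV(1) y(2) yV(2) y1(2)] .
        have yNx: "y \<notin> Nx" using y(1) H_def by auto
        have xy: "\<not> adj x y" using yNx Nx_def unfolding cnbhd_def using yV by auto
        have xNy: "x \<notin> Ny" unfolding Ny_def cnbhd_def using xy wfa_sym[OF wf] y(2) x(2) by auto
        have xG: "x \<in> G" using x(1) xNy G_def by auto
        have cG: "card G < card V" using smaller[OF yV(1)] G_def Ny_def by simp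
        have "ILs adj blk G \<le> int (card (cnbhd adj G x)) + ILs adj blk (G - cnbhd adj G x)"
          using IH[of G] G_def cG xG x(2) by auto
        moreover have "cnbhd adj G x = Nx - Ny" unfolding G_def Nx_def using cnbhd_diff[OF xNy] .
        moreover have "cnbhd adj H y = Ny - Nx" unfolding H_def Ny_def using cnbhd_diff[OF yNx] .
        moreover have "G - (Nx - Ny) = H - (Ny - Nx)" unfolding G_def H_def by auto
        moreover have "card Nx = card (Nx - Ny) + card (Nx \<inter> Ny)"
          using card_split cnbhd_fin[OF fV] Nx_def by blast
        moreover have "card Ny = card (Ny - Nx) + card (Nx \<inter> Ny)"
          using card_split[of Ny Nx] cnbhd_fin[OF fV] Ny_def by (simp add: Int_commute)
        ultimately show ?thesis using r1 y(4) Nx_def H_def by simp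
      next
        case False
        have bH: "IRs adj blk H = bal blk H" using False fH by (simp add: IRs_edgeless)
        have y0w: "\<not> blk y0" using wfa_col[OF wf y0(2)] x(2) by simp
        define Ny where "Ny = cnbhd adj V y0"
        define G where "G = V - Ny"
        have r1: "IRs adj blk V \<le> ILs adj blk G - int (card Ny)"
          unfolding G_def Ny_def using IRs_le[where adj=adj and blk=blk, OF fV y0(1) y0w x(1) wfa_sym[OF wf y0(2)]] .
        have fG: "finite G" using fV G_def by simp
        have u: "ILs adj blk G \<le> int (card G) - 2 * int (card (WI adj blk G))"
          using U_bound[OF wf fG] by simp
        have sub: "{w \<in> H. \<not> blk w} \<subseteq> WI adj blk G"
        proof
          fix w assume w: "w \<in> {w \<in> H. \<not> blk w}"
          have wV: "w \<in> V" "w \<notin> Nx" "\<not> blk w" using w H_def by auto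
          have "w \<noteq> y0" using wV(2) y0 Nx_def unfolding cnbhd_def by auto
          moreover have "\<not> adj y0 w" using wfa_col[OF wf, of y0 w] y0w wV(3) by auto
          ultimately have wG: "w \<in> G" using wV(1) G_def Ny_def unfolding cnbhd_def by auto
          have "\<not> adj w z" if z: "z \<in> G" for z
          proof
            assume a: "adj w z"
            have zV: "z \<in> V" using z G_def by auto
            show False
            proof (cases "z \<in> H")
              case True
              then show False using False a w unfolding has_edge_def by blast
            next
              case zH: False
              then have "z \<in> Nx" using zV H_def by auto
              then have "z = x \<or> adj x z" unfolding Nx_def cnbhd_def by auto
              then show False
              proof
                assume "z = x"
                then have "z \<in> Ny" unfolding Ny_def cnbhd_def using wfa_sym[OF wf y0(2)] x(1) by auto
                then show False using z G_def by auto
              next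
                assume "adj x z"
                then have "\<not> blk z" using wfa_col[OF wf] x(2) by metis
                then show False using wfa_col[OF wf a] wV(3) by simp
              qed
            qed
          qed
          then show "w \<in> WI adj blk G" using wG wV(3) unfolding WI_def by auto
        qed
        have fWI: "finite (WI adj blk G)" using fG unfolding WI_def by simp
        have c1: "card {w \<in> H. \<not> blk w} \<le> card (WI adj blk G)" using card_mono[OF fWI sub] .
        have c2: "card V = card G + card Ny" using csplit[OF y0(1)] G_def Ny_def by simp
        have c3: "card V = card H + card Nx" using csplit[OF x(1)] H_def Nx_def by simp
        have c4: "card H = card {v\<in>H. blk v} + card {v\<in>H. \<not> blk v}" using card_bw[OF fH] .
        show ?thesis using r1 u c1 c2 c3 c4 bH unfolding bal_def Nx_def[symmetric] H_def[symmetric]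
          by linarith
      qed
    qed
  qed
  have L: "\<And>x. x \<in> V \<Longrightarrow> blk x \<Longrightarrow>
     ILs adj blk V \<le> int (card (cnbhd adj V x)) + ILs adj blk (V - cnbhd adj V x)"
  proof -
    fix x assume x: "x \<in> V" "blk x"
    show "?thesis x"
    proof (cases "\<exists>y\<in>V. adj x y")
      case False
      then show ?thesis using isocase x by simp
    next
      case True
      then have he: "has_edge adj V" unfolding has_edge_def using x(1) by blast
      obtain z where z: "z \<in> V" "blk z" "\<exists>y\<in>V. adj z y"
        "ILs adj blk V = int (card (cnbhd adj V z)) + IRs adj blk (V - cnbhd adj V z)"
        using ILs_obtain[OF fV he wf] by metis
      define Nx where "Nx = cnbhd adj V x"
      define H where "H = V - Nx"
      have fH: "finite H" using fV H_def by simp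
      have cH: "card H < card V" using smaller[OF x(1)] H_def Nx_def by simp
      show ?thesis
      proof (cases "z = x")
        case True
        have "IRs adj blk H \<le> ILs adj blk H" using IH[of H] cH H_def by auto
        then show ?thesis using z(4) True Nx_def H_def by simp
      next
        case False
        define Nz where "Nz = cnbhd adj V z"
        define G where "G = V - Nz"
        have xNz: "x \<notin> Nz" unfolding Nz_def cnbhd_def using False wfa_col[OF wf, of z x] x(2) z(2) by auto
        have zNx: "z \<notin> Nx" unfolding Nx_def cnbhd_def using False wfa_col[OF wf, of x z] x(2) z(2) by auto
        have xG: "x \<in> G" using x(1) xNz G_def by auto
        have zH: "z \<in> H" using z(1) zNx H_def by auto
        have cG: "card G < card V" using smaller[OF z(1)] G_def Nz_def by simp
        have r1: "IRs adj blk G \<le> int (card (cnbhd adj G x)) + IRs adj blk (G - cnbhd adj G x)"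
          using IH[of G] G_def cG xG x(2) by auto
        have C: "int (card (cnbhd adj H z)) + IRs adj blk (H - cnbhd adj H z) \<le> ILs adj blk H"
        proof (cases "\<exists>y\<in>H. adj z y")
          case True
          then show ?thesis using ILs_ge[where adj=adj and blk=blk, OF fH zH z(2)] by blast
        next
          case False
          have e: "cnbhd adj H z = {z}" using False unfolding cnbhd_def by auto
          have "ILs adj blk H = ILs adj blk (H - {z}) + 1" using iso_one[OF wf fH zH] False z(2) by simp
          moreover have "card (H - {z}) < card V" using cH fH zH
            by (meson card_Diff1_less order.strict_trans)
          moreover have "IRs adj blk (H - {z}) \<le> ILs adj blk (H - {z})" using IH[of "H - {z}"] calculation(2) H_def by auto
          ultimately show ?thesis using e by simp
        qed
        have "cnbhd adj G x = Nx - Nz" unfolding G_def Nx_def using cnbhd_diff[OF xNz] .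
        moreover have "cnbhd adj H z = Nz - Nx" unfolding H_def Nz_def using cnbhd_diff[OF zNx] .
        moreover have "G - (Nx - Nz) = H - (Nz - Nx)" unfolding G_def H_def by auto
        moreover have "card Nx = card (Nx - Nz) + card (Nx \<inter> Nz)"
          using card_split cnbhd_fin[OF fV] Nx_def by blast
        moreover have "card Nz = card (Nz - Nx) + card (Nx \<inter> Nz)"
          using card_split[of Nz Nx] cnbhd_fin[OF fV] Nz_def by (simp add: Int_commute)
        ultimately show ?thesis using r1 C z(4) Nx_def H_def Nz_def G_def by simp
      qed
    qed
  qed
  have D: "IRs adj blk V \<le> ILs adj blk V"
  proof (cases "has_edge adj V")
    case False
    then show ?thesis using fV by (simp add: ILs_edgeless IRs_edgeless)
  next
    case True
    obtain x where x: "x \<in> V" "blk x" "\<exists>y\<in>V. adj x y"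
      "ILs adj blk V = int (card (cnbhd adj V x)) + IRs adj blk (V - cnbhd adj V x)"
      using ILs_obtain[OF fV True wf] by metis
    then show ?thesis using R[OF x(1,2)] by simp
  qed
  show ?case using L R D by blast
qed


lemma wfa_neg: "wfa adj blk \<Longrightarrow> wfa adj (\<lambda>x. \<not> blk x)"
  unfolding wfa_def by auto

lemma bal_neg: "bal (\<lambda>x. \<not> blk x) V = - bal blk V"
  unfolding bal_def by simp

lemma duality_aux:
  assumes f: "finite V"
  shows "\<forall>blk. wfa adj blk \<longrightarrow> ILs adj blk V \<le> - IRs adj (\<lambda>x. \<not> blk x) V
      \<and> - ILs adj (\<lambda>x. \<not> blk x) V \<le> IRs adj blk V"
  using f
proof (induction "card V" arbitrary: V rule: less_induct)
  case less
  note fV = less.prems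
  have IH: "\<And>W blk. W \<subseteq> V \<Longrightarrow> card W < card V \<Longrightarrow> wfa adj blk \<Longrightarrow>
     ILs adj blk W = - IRs adj (\<lambda>x. \<not> blk x) W \<and> IRs adj blk W = - ILs adj (\<lambda>x. \<not> blk x) W"
  proof -
    fix W and blk :: "'a \<Rightarrow> bool" assume W: "W \<subseteq> V" "card W < card V" "wfa adj blk"
    have fW: "finite W" using W fV finite_subset by blast
    have a: "ILs adj blk W \<le> - IRs adj (\<lambda>x. \<not> blk x) W \<and> - ILs adj (\<lambda>x. \<not> blk x) W \<le> IRs adj blk W"
      using less.hyps[OF W(2) fW] W(3) by blast
    have b: "ILs adj (\<lambda>x. \<not> blk x) W \<le> - IRs adj (\<lambda>x. \<not> \<not> blk x) W \<and> - ILs adj (\<lambda>x. \<not> \<not> blk x) W \<le> IRs adj (\<lambda>x. \<not> blk x) W"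
      using less.hyps[OF W(2) fW] wfa_neg[OF W(3)] by blast
    show "ILs adj blk W = - IRs adj (\<lambda>x. \<not> blk x) W \<and> IRs adj blk W = - ILs adj (\<lambda>x. \<not> blk x) W"
      using a b by simp
  qed
  have smaller: "\<And>z. z \<in> V \<Longrightarrow> card (V - cnbhd adj V z) < card V"
    using fV by (intro psubset_card_mono) (auto simp: cnbhd_def)
  show ?case
  proof (intro allI impI)
    fix blk :: "'a \<Rightarrow> bool" assume wf: "wfa adj blk"
    show "ILs adj blk V \<le> - IRs adj (\<lambda>x. \<not> blk x) V \<and> - ILs adj (\<lambda>x. \<not> blk x) V \<le> IRs adj blk V"
    proof (cases "has_edge adj V")
      case False
      then show ?thesis using fV by (simp add: ILs_edgeless IRs_edgeless bal_neg)
    next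
      case True
      have A: "ILs adj blk V \<le> - IRs adj (\<lambda>x. \<not> blk x) V"
      proof -
        obtain x where x: "x \<in> V" "blk x" "\<exists>y\<in>V. adj x y"
          "ILs adj blk V = int (card (cnbhd adj V x)) + IRs adj blk (V - cnbhd adj V x)"
          using ILs_obtain[OF fV True wf] by metis
        obtain y where y: "y \<in> V" "adj x y" using x(3) by blast
        have "IRs adj (\<lambda>x. \<not> blk x) V \<le> ILs adj (\<lambda>x. \<not> blk x) (V - cnbhd adj V x) - int (card (cnbhd adj V x))"
          using IRs_le[where adj=adj and blk="\<lambda>x. \<not> blk x", OF fV x(1) _ y] x(2) by simp
        moreover have "IRs adj blk (V - cnbhd adj V x) = - ILs adj (\<lambda>x. \<not> blk x) (V - cnbhd adj V x)"
          using IH[OF _ smaller[OF x(1)] wf] by blast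
        ultimately show ?thesis using x(4) by simp
      qed
      have B: "- ILs adj (\<lambda>x. \<not> blk x) V \<le> IRs adj blk V"
      proof -
        obtain x where x: "x \<in> V" "\<not> blk x" "\<exists>y\<in>V. adj x y"
          "IRs adj blk V = ILs adj blk (V - cnbhd adj V x) - int (card (cnbhd adj V x))"
          using IRs_obtain[OF fV True wf] by metis
        obtain y where y: "y \<in> V" "adj x y" using x(3) by blast
        have "int (card (cnbhd adj V x)) + IRs adj (\<lambda>x. \<not> blk x) (V - cnbhd adj V x) \<le> ILs adj (\<lambda>x. \<not> blk x) V"
          using ILs_ge[where adj=adj and blk="\<lambda>x. \<not> blk x", OF fV x(1) _ y] x(2) by simp
        moreover have "ILs adj blk (V - cnbhd adj V x) = - IRs adj (\<lambda>x. \<not> blk x) (V - cnbhd adj V x)"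
          using IH[OF _ smaller[OF x(1)] wf] by blast
        ultimately show ?thesis using x(4) by simp
      qed
      show ?thesis using A B by simp
    qed
  qed
qed

lemma duality:
  assumes "finite V" "wfa adj blk"
  shows "ILs adj blk V = - IRs adj (\<lambda>x. \<not> blk x) V \<and> IRs adj blk V = - ILs adj (\<lambda>x. \<not> blk x) V"
proof -
  have a: "ILs adj blk V \<le> - IRs adj (\<lambda>x. \<not> blk x) V \<and> - ILs adj (\<lambda>x. \<not> blk x) V \<le> IRs adj blk V"
    using duality_aux[OF assms(1)] assms(2) by blast
  have b: "ILs adj (\<lambda>x. \<not> blk x) V \<le> - IRs adj (\<lambda>x. \<not> \<not> blk x) V \<and> - ILs adj (\<lambda>x. \<not> \<not> blk x) V \<le> IRs adj (\<lambda>x. \<not> blk x) V"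
    using duality_aux[OF assms(1)] wfa_neg[OF assms(2)] by blast
  show ?thesis using a b by simp
qed

lemma embed:
  assumes wf: "wfa adj blk" and wf': "wfa adj' blk'" and inj: "inj f"
    and ad: "\<And>u v. adj (f u) (f v) = adj' u v" and bl: "\<And>u. blk (f u) = blk' u"
    and fV: "finite V"
  shows "ILs adj blk (f ` V) = ILs adj' blk' V \<and> IRs adj blk (f ` V) = IRs adj' blk' V"
  using fV
proof (induction "card V" arbitrary: V rule: less_induct)
  case less
  note fV = less.prems
  have ffV: "finite (f ` V)" using fV by simp
  have smaller: "\<And>z. z \<in> V \<Longrightarrow> card (V - cnbhd adj' V z) < card V"
    using fV by (intro psubset_card_mono) (auto simp: cnbhd_def)
  have cn: "\<And>x. cnbhd adj (f ` V) (f x) = f ` cnbhd adj' V x"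
    unfolding cnbhd_def using ad by auto
  have df: "\<And>x. f ` V - f ` cnbhd adj' V x = f ` (V - cnbhd adj' V x)"
    using inj by (simp add: image_set_diff)
  have cc: "\<And>x. card (f ` cnbhd adj' V x) = card (cnbhd adj' V x)"
    using inj by (simp add: card_image inj_on_subset)
  have IH: "\<And>x. x \<in> V \<Longrightarrow> ILs adj blk (f ` (V - cnbhd adj' V x)) = ILs adj' blk' (V - cnbhd adj' V x)
     \<and> IRs adj blk (f ` (V - cnbhd adj' V x)) = IRs adj' blk' (V - cnbhd adj' V x)"
    using less.hyps smaller fV by blast
  have he: "has_edge adj (f ` V) = has_edge adj' V" unfolding has_edge_def using ad by auto
  show ?case
  proof (cases "has_edge adj' V")
    case False
    have b1: "{v \<in> f ` V. blk v} = f ` {v\<in>V. blk' v}" "{v \<in> f ` V. \<not> blk v} = f ` {v\<in>V. \<not> blk' v}"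
      using bl by auto
    have "bal blk (f ` V) = bal blk' V" unfolding bal_def b1 using inj
      by (simp add: card_image inj_on_subset)
    then show ?thesis using False he fV ffV by (simp add: ILs_edgeless IRs_edgeless)
  next
    case True
    have True': "has_edge adj (f ` V)" using True he by simp
    have A1: "ILs adj blk (f ` V) \<le> ILs adj' blk' V"
    proof -
      obtain x where x: "x \<in> f ` V" "blk x" "\<exists>y\<in>f ` V. adj x y"
        "ILs adj blk (f ` V) = int (card (cnbhd adj (f ` V) x)) + IRs adj blk (f ` V - cnbhd adj (f ` V) x)"
        using ILs_obtain[OF ffV True' wf] by metis
      then obtain u y where u: "u \<in> V" "x = f u" "y \<in> V" "adj' u y" using ad by auto
      have "int (card (cnbhd adj' V u)) + IRs adj' blk' (V - cnbhd adj' V u) \<le> ILs adj' blk' V"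
        using ILs_ge[where adj=adj' and blk=blk', OF fV u(1) _ u(3,4)] x(2) u(2) bl by simp
      then show ?thesis using x(4) u(2) cn df cc IH[OF u(1)] by simp
    qed
    have A2: "ILs adj blk (f ` V) \<ge> ILs adj' blk' V"
    proof -
      obtain u where u: "u \<in> V" "blk' u" "\<exists>y\<in>V. adj' u y"
        "ILs adj' blk' V = int (card (cnbhd adj' V u)) + IRs adj' blk' (V - cnbhd adj' V u)"
        using ILs_obtain[OF fV True wf'] by metis
      then obtain y where y: "y \<in> V" "adj' u y" by blast
      have "int (card (cnbhd adj (f ` V) (f u))) + IRs adj blk (f ` V - cnbhd adj (f ` V) (f u)) \<le> ILs adj blk (f ` V)"
        using ILs_ge[where adj=adj and blk=blk and V="f ` V" and x="f u" and y="f y"] ffV u y bl ad by simp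
      then show ?thesis using u(4) cn df cc IH[OF u(1)] by simp
    qed
    have B1: "IRs adj blk (f ` V) \<ge> IRs adj' blk' V"
    proof -
      obtain x where x: "x \<in> f ` V" "\<not> blk x" "\<exists>y\<in>f ` V. adj x y"
        "IRs adj blk (f ` V) = ILs adj blk (f ` V - cnbhd adj (f ` V) x) - int (card (cnbhd adj (f ` V) x))"
        using IRs_obtain[OF ffV True' wf] by metis
      then obtain u y where u: "u \<in> V" "x = f u" "y \<in> V" "adj' u y" using ad by auto
      have "IRs adj' blk' V \<le> ILs adj' blk' (V - cnbhd adj' V u) - int (card (cnbhd adj' V u))"
        using IRs_le[where adj=adj' and blk=blk', OF fV u(1) _ u(3,4)] x(2) u(2) bl by simp
      then show ?thesis using x(4) u(2) cn df cc IH[OF u(1)] by simp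
    qed
    have B2: "IRs adj blk (f ` V) \<le> IRs adj' blk' V"
    proof -
      obtain u where u: "u \<in> V" "\<not> blk' u" "\<exists>y\<in>V. adj' u y"
        "IRs adj' blk' V = ILs adj' blk' (V - cnbhd adj' V u) - int (card (cnbhd adj' V u))"
        using IRs_obtain[OF fV True wf'] by metis
      then obtain y where y: "y \<in> V" "adj' u y" by blast
      have "IRs adj blk (f ` V) \<le> ILs adj blk (f ` V - cnbhd adj (f ` V) (f u)) - int (card (cnbhd adj (f ` V) (f u)))"
        using IRs_le[where adj=adj and blk=blk and V="f ` V" and x="f u" and y="f y"] ffV u y bl ad by simp
      then show ?thesis using u(4) cn df cc IH[OF u(1)] by simp
    qed
    show ?thesis using A1 A2 B1 B2 by simp
  qed
qed


definition msym :: "('a \<Rightarrow> 'a \<Rightarrow> bool) \<Rightarrow> ('a \<Rightarrow> bool) \<Rightarrow> ('a \<Rightarrow> 'a) \<Rightarrow> 'a set \<Rightarrow> bool" where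
  "msym adj blk tau S = ((\<forall>u\<in>S. tau u \<in> S \<and> tau (tau u) = u \<and> blk (tau u) \<noteq> blk u \<and> \<not> adj u (tau u)
       \<and> (\<forall>w\<in>S. adj u w \<longrightarrow> \<not> adj w (tau u)))
     \<and> (\<forall>u\<in>S. \<forall>v\<in>S. adj (tau u) (tau v) = adj u v))"

definition sep :: "('a \<Rightarrow> 'a \<Rightarrow> bool) \<Rightarrow> 'a set \<Rightarrow> 'a set \<Rightarrow> bool" where
  "sep adj S T = (S \<inter> T = {} \<and> (\<forall>u\<in>S. \<forall>v\<in>T. \<not> adj u v \<and> \<not> adj v u))"

lemma msym_bal:
  assumes m: "msym adj blk tau S" and f: "finite S"
  shows "bal blk S = 0"
proof -
  have inv: "\<And>u. u \<in> S \<Longrightarrow> tau u \<in> S \<and> tau (tau u) = u \<and> blk (tau u) \<noteq> blk u"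
    using m unfolding msym_def by blast
  have inj: "inj_on tau S" by (metis inj_onI inv)
  have im: "tau ` {v\<in>S. blk v} = {v\<in>S. \<not> blk v}"
  proof
    show "tau ` {v\<in>S. blk v} \<subseteq> {v\<in>S. \<not> blk v}" using inv by auto
    show "{v\<in>S. \<not> blk v} \<subseteq> tau ` {v\<in>S. blk v}"
    proof
      fix w assume w: "w \<in> {v\<in>S. \<not> blk v}"
      then have "tau w \<in> {v\<in>S. blk v}" "w = tau (tau w)" using inv by auto
      then show "w \<in> tau ` {v\<in>S. blk v}" by blast
    qed
  qed
  have "card {v\<in>S. \<not> blk v} = card {v\<in>S. blk v}"
    unfolding im[symmetric] by (rule card_image) (rule inj_on_subset[OF inj], auto)
  then show ?thesis unfolding bal_def by simp
qed

lemma mirror_move: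
  assumes wf: "wfa adj blk" and m: "msym adj blk tau S" and sp: "sep adj S T"
    and y: "y \<in> S" and y1: "y1 \<in> S \<union> T" "adj y y1"
  defines "N \<equiv> cnbhd adj (S \<union> T) y"
  shows "N \<subseteq> S \<and> tau y \<in> (S \<union> T) - N \<and> tau y1 \<in> (S \<union> T) - N \<and> adj (tau y) (tau y1)
    \<and> blk (tau y) \<noteq> blk y
    \<and> cnbhd adj ((S \<union> T) - N) (tau y) = tau ` N \<and> card (tau ` N) = card N
    \<and> (S \<union> T) - N - tau ` N = (S - N - tau ` N) \<union> T
    \<and> msym adj blk tau (S - N - tau ` N) \<and> sep adj (S - N - tau ` N) T"
proof -
  have inv: "\<And>u. u \<in> S \<Longrightarrow> tau u \<in> S \<and> tau (tau u) = u \<and> blk (tau u) \<noteq> blk u \<and> \<not> adj u (tau u)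
       \<and> (\<forall>w\<in>S. adj u w \<longrightarrow> \<not> adj w (tau u))"
    using m unfolding msym_def by blast
  have iso: "\<And>u v. u \<in> S \<Longrightarrow> v \<in> S \<Longrightarrow> adj (tau u) (tau v) = adj u v"
    using m unfolding msym_def by blast
  have sym: "\<And>a b. adj a b \<Longrightarrow> adj b a" using wfa_sym[OF wf] .
  have spT: "\<And>u v. u \<in> S \<Longrightarrow> v \<in> T \<Longrightarrow> \<not> adj u v \<and> \<not> adj v u" "S \<inter> T = {}"
    using sp unfolding sep_def by blast+
  have y1S: "y1 \<in> S" using y1 spT(1)[OF y] by blast
  have N: "N = insert y {v\<in>S. adj y v}" unfolding N_def cnbhd_def using spT(1)[OF y] by auto
  have NS: "N \<subseteq> S" using N y by auto
  have ty: "tau y \<in> S" "tau (tau y) = y" "blk (tau y) \<noteq> blk y" "\<not> adj y (tau y)" using inv[OF y] by auto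
  have tyy: "tau y \<noteq> y" using ty(3) by auto
  have tyN: "tau y \<notin> N" using N ty(4) tyy by auto
  have ty1: "tau y1 \<in> S" "adj (tau y) (tau y1)" using inv[OF y1S] iso[OF y y1S] y1(2) by auto
  have ty1N: "tau y1 \<notin> N"
  proof
    assume "tau y1 \<in> N"
    then have "tau y1 = y \<or> adj y (tau y1)" using N by auto
    then show False
    proof
      assume "tau y1 = y"
      then show False using ty1(2) sym ty(4) by metis
    next
      assume a: "adj y (tau y1)"
      have "\<not> adj (tau y1) (tau y)" using inv[OF y] ty1(1) a by blast
      then show False using sym[OF ty1(2)] by simp
    qed
  qed
  have nb: "{v \<in> (S \<union> T) - N. adj (tau y) v} = tau ` {v\<in>S. adj y v}"
  proof
    show "{v \<in> (S \<union> T) - N. adj (tau y) v} \<subseteq> tau ` {v\<in>S. adj y v}"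
    proof
      fix v assume v: "v \<in> {v \<in> (S \<union> T) - N. adj (tau y) v}"
      have vS: "v \<in> S" using v spT(1)[OF ty(1)] by auto
      have "adj (tau (tau y)) (tau v)" using iso[OF ty(1) vS] v by simp
      then have "adj y (tau v)" using ty(2) by simp
      moreover have "tau v \<in> S" "v = tau (tau v)" using inv[OF vS] by auto
      ultimately show "v \<in> tau ` {v\<in>S. adj y v}" by blast
    qed
  next
    show "tau ` {v\<in>S. adj y v} \<subseteq> {v \<in> (S \<union> T) - N. adj (tau y) v}"
    proof
      fix u assume "u \<in> tau ` {v\<in>S. adj y v}"
      then obtain v where v: "v \<in> S" "adj y v" "u = tau v" by blast
      have uS: "u \<in> S" using inv[OF v(1)] v(3) by auto
      have au: "adj (tau y) u" using iso[OF y v(1)] v by simp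
      have "u \<noteq> y" using au sym ty(4) by metis
      moreover have "\<not> adj y u"
      proof
        assume "adj y u"
        then have "\<not> adj u (tau y)" using inv[OF y] uS by blast
        then show False using sym[OF au] by simp
      qed
      ultimately show "u \<in> {v \<in> (S \<union> T) - N. adj (tau y) v}" using N uS au by auto
    qed
  qed
  have c1: "cnbhd adj ((S \<union> T) - N) (tau y) = insert (tau y) {v \<in> (S \<union> T) - N. adj (tau y) v}"
    by (simp add: cnbhd_def)
  have c2: "tau ` N = insert (tau y) (tau ` {v\<in>S. adj y v})" using N by simp
  have cn: "cnbhd adj ((S \<union> T) - N) (tau y) = tau ` N"
    using c1 c2 nb by simp
  have injS: "inj_on tau S" by (metis inj_onI inv)
  have cc: "card (tau ` N) = card N" using inj_on_subset[OF injS NS] by (rule card_image)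
  have tNS: "tau ` N \<subseteq> S" using NS inv by auto
  have diff: "(S \<union> T) - N - tau ` N = (S - N - tau ` N) \<union> T" using NS tNS spT(2) by auto
  have ms: "msym adj blk tau (S - N - tau ` N)"
  proof -
    have "\<forall>u\<in>S - N - tau ` N. tau u \<in> S - N - tau ` N"
    proof
      fix u assume u: "u \<in> S - N - tau ` N"
      have a: "tau u \<in> S" "tau (tau u) = u" using inv u by auto
      have "tau u \<notin> N" using u a(2) by force
      moreover have "tau u \<notin> tau ` N"
      proof
        assume "tau u \<in> tau ` N"
        then obtain n where n: "n \<in> N" "tau u = tau n" by blast
        then have "u = n" using inj_onD[OF injS n(2)] u NS by blast
        then show False using u n by simp
      qed
      ultimately show "tau u \<in> S - N - tau ` N" using a by simp
    qed
    then show ?thesis using m unfolding msym_def by blast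
  qed
  have sp2: "sep adj (S - N - tau ` N) T" using sp unfolding sep_def by blast
  show ?thesis using NS ty tyN ty1 ty1N cn cc diff ms sp2 by blast
qed


lemma mirror:
  assumes wf: "wfa adj blk"
  shows "finite S \<Longrightarrow> finite T \<Longrightarrow> msym adj blk tau S \<Longrightarrow> sep adj S T \<Longrightarrow>
    IRs adj blk T \<le> IRs adj blk (S \<union> T) \<and> ILs adj blk T \<le> ILs adj blk (S \<union> T)"
proof (induction "card (S \<union> T)" arbitrary: S T rule: less_induct)
  case less
  note fS = less.prems(1) and fT = less.prems(2) and m = less.prems(3) and sp = less.prems(4)
  have fV: "finite (S \<union> T)" using fS fT by simp
  have spT: "\<And>u v. u \<in> S \<Longrightarrow> v \<in> T \<Longrightarrow> \<not> adj u v \<and> \<not> adj v u" "S \<inter> T = {}"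
    using sp unfolding sep_def by blast+
  have RR: "IRs adj blk T \<le> IRs adj blk (S \<union> T)"
  proof (cases "has_edge adj (S \<union> T)")
    case False
    have "\<not> has_edge adj T" using False unfolding has_edge_def by blast
    then have "IRs adj blk T = bal blk T" using fT by (simp add: IRs_edgeless)
    moreover have "IRs adj blk (S \<union> T) = bal blk S + bal blk T"
      using False fV by (simp add: IRs_edgeless bal_union[OF fS fT spT(2)])
    ultimately show ?thesis using msym_bal[OF m fS] by simp
  next
    case True
    obtain y where y: "y \<in> S \<union> T" "\<not> blk y" "\<exists>y1\<in>S \<union> T. adj y y1"
      "IRs adj blk (S \<union> T) = ILs adj blk (S \<union> T - cnbhd adj (S \<union> T) y) - int (card (cnbhd adj (S \<union> T) y))"
      using IRs_obtain[OF fV True wf] by metis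
    obtain y1 where y1: "y1 \<in> S \<union> T" "adj y y1" using y(3) by blast
    have sm: "card (S \<union> T - cnbhd adj (S \<union> T) y) < card (S \<union> T)"
      using fV y(1) by (intro psubset_card_mono) (auto simp: cnbhd_def)
    show ?thesis
    proof (cases "y \<in> S")
      case False
      then have yT: "y \<in> T" using y(1) by simp
      have y1T: "y1 \<in> T" using y1 spT(1)[of y1 y] yT by auto
      have cN: "cnbhd adj (S \<union> T) y = cnbhd adj T y"
        using cnbhd_union[of y T S adj] yT spT(1) by (simp add: Un_commute)
      define N where "N = cnbhd adj T y"
      have NT: "N \<subseteq> T" using cnbhd_sub[OF yT] N_def by simp
      have e: "S \<union> T - N = S \<union> (T - N)" using NT spT(2) by auto
      have h: "IRs adj blk (T - N) \<le> IRs adj blk (S \<union> (T - N)) \<and> ILs adj blk (T - N) \<le> ILs adj blk (S \<union> (T - N))"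
        using less.hyps[of S "T - N"] sm cN e fS fT m sp N_def unfolding sep_def by auto
      have "IRs adj blk T \<le> ILs adj blk (T - N) - int (card N)"
        unfolding N_def using IRs_le[where adj=adj and blk=blk, OF fT yT y(2) y1T y1(2)] .
      then show ?thesis using y(4) cN e h N_def by simp
    next
      case True
      define N where "N = cnbhd adj (S \<union> T) y"
      have mm: "N \<subseteq> S \<and> tau y \<in> (S \<union> T) - N \<and> tau y1 \<in> (S \<union> T) - N \<and> adj (tau y) (tau y1)
        \<and> blk (tau y) \<noteq> blk y
        \<and> cnbhd adj ((S \<union> T) - N) (tau y) = tau ` N \<and> card (tau ` N) = card N
        \<and> (S \<union> T) - N - tau ` N = (S - N - tau ` N) \<union> T
        \<and> msym adj blk tau (S - N - tau ` N) \<and> sep adj (S - N - tau ` N) T"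
        unfolding N_def by (rule mirror_move[OF wf m sp True y1])
      have fV': "finite ((S \<union> T) - N)" using fV by simp
      have "int (card (cnbhd adj ((S \<union> T) - N) (tau y))) + IRs adj blk ((S \<union> T) - N - cnbhd adj ((S \<union> T) - N) (tau y))
          \<le> ILs adj blk ((S \<union> T) - N)"
      proof (rule ILs_ge[OF fV'])
        show "tau y \<in> S \<union> T - N" "tau y1 \<in> S \<union> T - N" "adj (tau y) (tau y1)" using mm by blast+
        show "blk (tau y)" using mm y(2) by blast
      qed
      then have g: "int (card N) + IRs adj blk ((S - N - tau ` N) \<union> T) \<le> ILs adj blk ((S \<union> T) - N)"
        using mm by simp
      have sub: "(S - N - tau ` N) \<union> T \<subseteq> S \<union> T - N" using mm by auto
      have "card ((S - N - tau ` N) \<union> T) < card (S \<union> T)"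
        using card_mono[OF fV' sub] sm N_def by simp
      then have "IRs adj blk T \<le> IRs adj blk ((S - N - tau ` N) \<union> T)"
        using less.hyps[of "S - N - tau ` N" T] fS fT mm by auto
      then show ?thesis using g y(4) N_def by simp
    qed
  qed
  have LL: "ILs adj blk T \<le> ILs adj blk (S \<union> T)"
  proof (cases "has_edge adj T")
    case True
    obtain x where x: "x \<in> T" "blk x" "\<exists>y\<in>T. adj x y"
      "ILs adj blk T = int (card (cnbhd adj T x)) + IRs adj blk (T - cnbhd adj T x)"
      using ILs_obtain[OF fT True wf] by metis
    obtain x1 where x1: "x1 \<in> T" "adj x x1" using x(3) by blast
    have cN: "cnbhd adj (S \<union> T) x = cnbhd adj T x"
      using cnbhd_union[of x T S adj] x(1) spT(1) by (simp add: Un_commute)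
    define N where "N = cnbhd adj T x"
    have NT: "N \<subseteq> T" using cnbhd_sub[OF x(1)] N_def by simp
    have e: "S \<union> T - N = S \<union> (T - N)" using NT spT(2) by auto
    have sm: "card (S \<union> T - N) < card (S \<union> T)"
      using fV x(1) N_def by (intro psubset_card_mono) (auto simp: cnbhd_def)
    have h: "IRs adj blk (T - N) \<le> IRs adj blk (S \<union> (T - N))"
      using less.hyps[of S "T - N"] sm e fS fT m sp unfolding sep_def by auto
    have "int (card (cnbhd adj (S \<union> T) x)) + IRs adj blk (S \<union> T - cnbhd adj (S \<union> T) x) \<le> ILs adj blk (S \<union> T)"
      using ILs_ge[where adj=adj and blk=blk, OF fV _ x(2) _ x1(2)] x(1) x1(1) by simp
    then show ?thesis using x(4) cN e h N_def by simp
  next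
    case False
    have bT: "ILs adj blk T = bal blk T" using False fT by (simp add: ILs_edgeless)
    have "ILs adj blk (S \<union> T) = ILs adj blk S + bal blk T"
      using iso_split[OF wf fS fT spT(2)] spT(1) False unfolding has_edge_def by blast
    moreover have "IRs adj blk S \<le> ILs adj blk S" using M_lemma[OF wf fS] by blast
    moreover have "IRs adj blk {} \<le> IRs adj blk S"
    proof (cases "T = {}")
      case True
      then show ?thesis using RR by simp
    next
      case False
      have "card S < card (S \<union> T)" using False fS fT spT(2)
        by (metis Int_absorb1 Un_upper1 card_seteq finite_Un linorder_not_le sup.absorb_iff1 Un_Int_eq(3) inf_bot_right sup_bot.neutr_eq_iff)
      then show ?thesis using less.hyps[of S "{}"] fS m unfolding sep_def by auto
    qed
    moreover have "IRs adj blk {} = 0" by (simp add: IRs_edgeless has_edge_def bal_def)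
    ultimately show ?thesis using bT by simp
  qed
  show ?case using RR LL by simp
qed


lemma mirror_eq:
  assumes wf: "wfa adj blk" and fS: "finite S" and fT: "finite T"
    and m: "msym adj blk tau S" and sp: "sep adj S T"
  shows "ILs adj blk (S \<union> T) = ILs adj blk T \<and> IRs adj blk (S \<union> T) = IRs adj blk T"
proof -
  have wf': "wfa adj (\<lambda>x. \<not> blk x)" using wfa_neg[OF wf] .
  have m': "msym adj (\<lambda>x. \<not> blk x) tau S" using m unfolding msym_def by auto
  have a: "IRs adj blk T \<le> IRs adj blk (S \<union> T) \<and> ILs adj blk T \<le> ILs adj blk (S \<union> T)"
    using mirror[OF wf fS fT m sp] .
  have b: "IRs adj (\<lambda>x. \<not> blk x) T \<le> IRs adj (\<lambda>x. \<not> blk x) (S \<union> T) \<and> ILs adj (\<lambda>x. \<not> blk x) T \<le> ILs adj (\<lambda>x. \<not> blk x) (S \<union> T)"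
    using mirror[OF wf' fS fT m' sp] .
  have fU: "finite (S \<union> T)" using fS fT by simp
  show ?thesis using a b duality[OF fU wf] duality[OF fT wf] by linarith
qed

definition cadj :: "bool list \<Rightarrow> bool list \<Rightarrow> bool" where
  "cadj xs ys = (length xs = length ys \<and> card {i. i < length xs \<and> xs ! i \<noteq> ys ! i} = 1)"

definition cblk :: "bool list \<Rightarrow> bool" where
  "cblk xs = odd (length (filter id xs))"

definition hd_set :: "bool list \<Rightarrow> bool list \<Rightarrow> nat set" where
  "hd_set xs ys = {i. i < length xs \<and> xs ! i \<noteq> ys ! i}"

lemma card_symdiff: "finite A \<Longrightarrow> finite B \<Longrightarrow> card A + card B = card (A - B) + card (B - A) + 2 * card (A \<inter> B)"
proof -
  assume f: "finite A" "finite B"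
  have "card A = card (A - B) + card (A \<inter> B)" using card_split[OF f(1)] .
  moreover have "card B = card (B - A) + card (B \<inter> A)" using card_split[OF f(2)] .
  ultimately show ?thesis by (simp add: Int_commute)
qed

lemma parity_flip:
  assumes l: "length xs = length ys" and o: "odd (card (hd_set xs ys))"
  shows "cblk xs \<noteq> cblk ys"
proof -
  define A where "A = {i. i < length xs \<and> xs ! i}"
  define B where "B = {i. i < length ys \<and> ys ! i}"
  have fA: "finite A" "finite B" unfolding A_def B_def by auto
  have "hd_set xs ys = (A - B) \<union> (B - A)" unfolding hd_set_def A_def B_def using l by auto
  moreover have "card ((A - B) \<union> (B - A)) = card (A - B) + card (B - A)"
    by (rule card_Un_disjoint) (use fA in auto)
  ultimately have "card (hd_set xs ys) = card (A - B) + card (B - A)" by simp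
  then have "odd (card A + card B)" using card_symdiff[OF fA] o by simp
  moreover have "cblk xs = odd (card A)" "cblk ys = odd (card B)"
    unfolding cblk_def A_def B_def by (simp_all add: length_filter_conv_card)
  ultimately show ?thesis by auto
qed

lemma hd_set_sym: "length xs = length ys \<Longrightarrow> hd_set ys xs = hd_set xs ys"
  unfolding hd_set_def by auto

lemma hd_tri:
  assumes "length a = length b" "length b = length c"
  shows "card (hd_set a c) \<le> card (hd_set a b) + card (hd_set b c)"
proof -
  have "hd_set a c \<subseteq> hd_set a b \<union> hd_set b c" unfolding hd_set_def using assms by auto
  then have "card (hd_set a c) \<le> card (hd_set a b \<union> hd_set b c)"
    by (intro card_mono) (auto simp: hd_set_def)
  also have "\<dots> \<le> card (hd_set a b) + card (hd_set b c)" by (rule card_Un_le)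
  finally show ?thesis .
qed

definition ctau :: "nat \<Rightarrow> bool list \<Rightarrow> bool list" where
  "ctau k xs = map (\<lambda>i. if i < k then \<not> xs ! i else xs ! i) [0..<length xs]"

lemma ctau_len[simp]: "length (ctau k xs) = length xs" unfolding ctau_def by simp
lemma ctau_nth: "i < length xs \<Longrightarrow> ctau k xs ! i = (if i < k then \<not> xs ! i else xs ! i)"
  unfolding ctau_def by simp
lemma ctau_inv: "ctau k (ctau k xs) = xs"
  by (rule nth_equalityI) (auto simp: ctau_nth)
lemma ctau_hd: "length xs = length ys \<Longrightarrow> hd_set (ctau k xs) (ctau k ys) = hd_set xs ys"
  unfolding hd_set_def by (auto simp: ctau_nth split: if_splits)
lemma ctau_self: "k \<le> length xs \<Longrightarrow> hd_set xs (ctau k xs) = {..<k}"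
  unfolding hd_set_def by (auto simp: ctau_nth split: if_splits)

lemma cadj_hd: "cadj xs ys = (length xs = length ys \<and> card (hd_set xs ys) = 1)"
  unfolding cadj_def hd_set_def by simp

definition sadj :: "('a \<Rightarrow> 'a \<Rightarrow> bool) \<Rightarrow> ('b \<Rightarrow> 'b \<Rightarrow> bool) \<Rightarrow> 'a + 'b \<Rightarrow> 'a + 'b \<Rightarrow> bool" where
  "sadj adj1 adj2 = (\<lambda>u v. case (u, v) of (Inl a, Inl a') \<Rightarrow> adj1 a a' | (Inr b, Inr b') \<Rightarrow> adj2 b b'
                         | _ \<Rightarrow> False)"

lemma sadj_simps[simp]: "sadj adj1 adj2 (Inl a) (Inl a') = adj1 a a'"
  "sadj adj1 adj2 (Inr b) (Inr b') = adj2 b b'"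
  "sadj adj1 adj2 (Inl a) (Inr b) = False" "sadj adj1 adj2 (Inr b) (Inl a) = False"
  unfolding sadj_def by simp_all

lemma psum_eq: "psum (adj1, blk1, V1) (adj2, blk2, V2) = (sadj adj1 adj2, case_sum blk1 blk2, Inl ` V1 \<union> Inr ` V2)"
  unfolding psum_def sadj_def by simp

lemma hyper_eq: "hypercube n = (cadj, cblk, {xs. length xs = n})"
  unfolding hypercube_def cadj_def cblk_def by simp

lemma wfa_cube: "wfa cadj cblk"
  unfolding wfa_def
proof (intro conjI allI impI)
  fix x y assume a: "cadj x y"
  then show "cadj y x" unfolding cadj_hd using hd_set_sym by metis
  show "cblk x \<noteq> cblk y" using a unfolding cadj_hd by (intro parity_flip) auto
next
  fix x show "\<not> cadj x x" unfolding cadj_hd hd_set_def by simp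
qed

lemma wfa_sum: "wfa adj1 blk1 \<Longrightarrow> wfa adj2 blk2 \<Longrightarrow> wfa (sadj adj1 adj2) (case_sum blk1 blk2)"
  unfolding wfa_def sadj_def by (auto split: sum.splits)


theorem mainTheorem11:
  fixes n :: nat and X :: "'b pos"
  assumes "n \<ge> 3" and "wf_pos X"
  shows "Ls (psum (hypercube n) X) = Ls X \<and> Rs (psum (hypercube n) X) = Rs X"
proof -
  obtain adj2 blk2 V2 where X: "X = (adj2, blk2, V2)" by (cases X) auto
  have fV2: "finite V2" and wf2: "wfa adj2 blk2"
    using assms(2) unfolding X wf_pos_def wfa_def by auto
  define k where "k = (if odd n then n else n - 1)"
  have k: "odd k" "3 \<le> k" "k \<le> n" using assms(1) unfolding k_def by (cases "n = 3"; auto)+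
  define C where "C = {xs::bool list. length xs = n}"
  have fC: "finite C"
    using finite_lists_length_eq[of "UNIV :: bool set" n] unfolding C_def by simp
  define tau :: "bool list + 'b \<Rightarrow> bool list + 'b" where
    "tau = (\<lambda>u. case u of Inl a \<Rightarrow> Inl (ctau k a) | Inr b \<Rightarrow> Inr b)"
  define A where "A = sadj cadj adj2"
  define B where "B = case_sum cblk blk2"
  have wfA: "wfa A B" unfolding A_def B_def using wfa_sum[OF wfa_cube wf2] .
  have self: "\<And>a. a \<in> C \<Longrightarrow> card (hd_set a (ctau k a)) = k \<and> card (hd_set (ctau k a) a) = k"
  proof -
    fix a assume a: "a \<in> C"
    have "hd_set a (ctau k a) = {..<k}" using ctau_self[of k a] k(3) a unfolding C_def by simp
    moreover have "hd_set (ctau k a) a = hd_set a (ctau k a)" using hd_set_sym[of a "ctau k a"] by simp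
    ultimately show "card (hd_set a (ctau k a)) = k \<and> card (hd_set (ctau k a) a) = k" by simp
  qed
  have ms: "msym A B tau (Inl ` C)"
    unfolding msym_def
  proof (intro conjI ballI impI notI)
    fix u :: "bool list + 'b" assume "u \<in> Inl ` C"
    then obtain a where a: "a \<in> C" "u = Inl a" by blast
    have la: "length (ctau k a) = n" using a unfolding C_def by simp
    show "tau u \<in> Inl ` C" using a la unfolding tau_def C_def by auto
    show "tau (tau u) = u" using a unfolding tau_def by (simp add: ctau_inv)
    have "cblk a \<noteq> cblk (ctau k a)" using parity_flip[of a "ctau k a"] self[OF a(1)] k(1) by simp
    then show "B (tau u) = B u \<Longrightarrow> False" using a unfolding tau_def B_def by auto
    show "A u (tau u) \<Longrightarrow> False" using a self[OF a(1)] k(2) unfolding tau_def A_def cadj_hd by auto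
    show "\<And>w. w \<in> Inl ` C \<Longrightarrow> A u w \<Longrightarrow> A w (tau u) \<Longrightarrow> False"
    proof -
      fix w :: "bool list + 'b" assume w: "w \<in> Inl ` C" "A u w" "A w (tau u)"
      then obtain b where b: "b \<in> C" "w = Inl b" by blast
      have "cadj a b" "cadj b (ctau k a)" using w a b unfolding A_def tau_def by auto
      then have "card (hd_set a b) = 1" "card (hd_set b (ctau k a)) = 1" "length a = length b"
        "length b = length (ctau k a)" unfolding cadj_hd by auto
      then have "card (hd_set a (ctau k a)) \<le> 2" using hd_tri[of a b "ctau k a"] by simp
      then show False using self[OF a(1)] k(2) by simp
    qed
  next
    fix u v :: "bool list + 'b" assume "u \<in> Inl ` C" "v \<in> Inl ` C"
    then obtain a b where ab: "a \<in> C" "u = Inl a" "b \<in> C" "v = Inl b" by blast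
    have l: "length a = length b" using ab unfolding C_def by simp
    show "A (tau u) (tau v) = A u v" using ab l ctau_hd[OF l, of k] unfolding A_def tau_def cadj_hd
      by simp
  qed
  have sp: "sep A (Inl ` C) (Inr ` V2)" unfolding sep_def A_def by auto
  have eq1: "ILs A B (Inl ` C \<union> Inr ` V2) = ILs A B (Inr ` V2) \<and> IRs A B (Inl ` C \<union> Inr ` V2) = IRs A B (Inr ` V2)"
    using mirror_eq[OF wfA _ _ ms sp] fC fV2 by simp
  have eq2: "ILs A B (Inr ` V2) = ILs adj2 blk2 V2 \<and> IRs A B (Inr ` V2) = IRs adj2 blk2 V2"
    by (rule embed[OF wfA wf2]) (auto simp: A_def B_def fV2)
  have P: "psum (hypercube n) X = (A, B, Inl ` C \<union> Inr ` V2)"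
    unfolding hyper_eq X psum_eq A_def B_def C_def by simp
  show ?thesis unfolding Ls_def Rs_def P using eq1 eq2 X by simp
qed

end
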